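(* For every $\Delta > 0$ there exists a constant $c > 0$ such that the following holds for all sufficiently large $M$. Let $|\Psi_1\rangle$ be any normalized state of $M$ qubits that is a linear combination of tensor products $|s_1\rangle\otimes\cdots\otimes|s_M\rangle$ with each $|s_i\rangle\in\{|+\rangle,|-\rangle\}$, where every term appearing with nonzero coefficient has at most $r = cM$ factors equal to $|-\rangle$. Then measuring $|\Psi_1\rangle$ in the computational basis $\{|0\rangle,|1\rangle\}^{\otimes M}$ yields, with high probability, an outcome string $y\in\{0,1\}^M$ whose Hamming weight lies between $M(1/2-\Delta)$ and $M(1/2+\Delta)$. Here "with high probability" means that the probability of obtaining a string of weight outside this range is bounded by a quantity independent of the particular state $|\Psi_1\rangle$ that tends to $0$ as $M\to\infty$.
   Context: The single-qubit states are $|\pm\rangle = (|0\rangle \pm |1\rangle)/\sqrt{2}$, so that $|0\rangle = (|+\rangle+|-\rangle)/\sqrt{2}$ and $|1\rangle = (|+\rangle-|-\rangle)/\sqrt{2}$. The Hamming weight of $y\in\{0,1\}^M$ is the number of coordinates equal to $1$. Measuring in the computational basis gives outcome $y$ with probability $|\langle y|\Psi_1\rangle|^2$. *)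

theory Defs
  imports "HOL-Analysis.Analysis"
begin

text \<open>Computational basis strings y in {0,1}^M are encoded as subsets Y of {..<M}
 (the positions where y_i = 1); the Hamming weight of y is card Y.
 Likewise a product |s_1> ... |s_M> with s_i in {+,-} is encoded by the set S
 of positions carrying |->.\<close>

definition bitstrings :: "nat \<Rightarrow> nat set set" where
  "bitstrings M = Pow {..<M}"

text \<open>Single-qubit amplitude <b|s> with b = 1 iff bit1, s = |-> iff minus.\<close>
definition ket_pm_amp :: "bool \<Rightarrow> bool \<Rightarrow> complex" where
  "ket_pm_amp b m = (if b \<and> m then - 1 else 1) / complex_of_real (sqrt 2)"

definition pm_product :: "nat \<Rightarrow> nat set \<Rightarrow> nat set \<Rightarrow> complex" where
  "pm_product M S Y = (\<Prod>i<M. ket_pm_amp (i \<in> Y) (i \<in> S))"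

definition pm_state :: "nat \<Rightarrow> (nat set \<Rightarrow> complex) \<Rightarrow> nat set \<Rightarrow> complex" where
  "pm_state M a Y = (\<Sum>S\<in>bitstrings M. a S * pm_product M S Y)"

definition normalized :: "nat \<Rightarrow> (nat set \<Rightarrow> complex) \<Rightarrow> bool" where
  "normalized M \<psi> \<longleftrightarrow> (\<Sum>Y\<in>bitstrings M. (cmod (\<psi> Y))\<^sup>2) = 1"

definition outcome_prob :: "nat \<Rightarrow> (nat set \<Rightarrow> complex) \<Rightarrow> nat set \<Rightarrow> real" where
  "outcome_prob M \<psi> Y = (cmod (\<psi> Y))\<^sup>2"

end

theory Submission
  imports Defs
begin


lemma sum_Pow_prod:
  fixes f :: "'a \<Rightarrow> bool \<Rightarrow> 'c::comm_semiring_1"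
  assumes "finite I"
  shows "(\<Sum>Y\<in>Pow I. \<Prod>i\<in>I. f i (i\<in>Y)) = (\<Prod>i\<in>I. f i False + f i True)"
proof -
  have "(\<Prod>i\<in>I. f i False + f i True) = (\<Prod>i\<in>I. f i True + f i False)" by (simp add: add.commute)
  also have "\<dots> = (\<Sum>X\<in>Pow I. (\<Prod>x\<in>X. f x True) * (\<Prod>x\<in>I-X. f x False))"
    by (rule prod_add[OF assms])
  also have "\<dots> = (\<Sum>Y\<in>Pow I. \<Prod>i\<in>I. f i (i\<in>Y))"
  proof (rule sum.cong[OF refl])
    fix X assume "X \<in> Pow I"
    hence XI: "X \<subseteq> I" by auto
    have "(\<Prod>i\<in>I. f i (i\<in>X)) = (\<Prod>i\<in>I \<inter> X. f i (i\<in>X)) * (\<Prod>i\<in>I - X. f i (i\<in>X))"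
      using assms by (metis prod.Int_Diff)
    also have "\<dots> = (\<Prod>x\<in>X. f x True) * (\<Prod>x\<in>I-X. f x False)"
      using XI by (simp add: Int_absorb1)
    finally show "(\<Prod>x\<in>X. f x True) * (\<Prod>x\<in>I-X. f x False) = (\<Prod>i\<in>I. f i (i\<in>X))" by simp
  qed
  finally show ?thesis by simp
qed

lemma pm_orth:
  assumes "S \<subseteq> {..<M}" "T \<subseteq> {..<M}"
  shows "(\<Sum>Y\<in>bitstrings M. pm_product M S Y * cnj (pm_product M T Y)) = (if S = T then 1 else 0)"
proof -
  have "(\<Sum>Y\<in>bitstrings M. pm_product M S Y * cnj (pm_product M T Y))
     = (\<Sum>Y\<in>Pow {..<M}. \<Prod>i\<in>{..<M}. (\<lambda>i b. ket_pm_amp b (i\<in>S) * cnj (ket_pm_amp b (i\<in>T))) i (i\<in>Y))"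
    unfolding bitstrings_def pm_product_def by (simp add: prod.distrib)
  also have "\<dots> = (\<Prod>i\<in>{..<M}. ket_pm_amp False (i\<in>S) * cnj (ket_pm_amp False (i\<in>T))
        + ket_pm_amp True (i\<in>S) * cnj (ket_pm_amp True (i\<in>T)))"
    by (rule sum_Pow_prod) simp
  also have "\<dots> = (\<Prod>i\<in>{..<M}. if (i\<in>S) = (i\<in>T) then 1 else 0)"
  proof (rule prod.cong[OF refl])
    fix i
    have r: "\<And>b m. ket_pm_amp b m = complex_of_real ((if b \<and> m then - 1 else 1) / sqrt 2)"
      by (cases "b \<and> m") (simp_all add: ket_pm_amp_def)
    have h: "(1 / sqrt 2) * (1 / sqrt 2) = (1/2::real)"
      by simp
    show "ket_pm_amp False (i\<in>S) * cnj (ket_pm_amp False (i\<in>T))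
        + ket_pm_amp True (i\<in>S) * cnj (ket_pm_amp True (i\<in>T)) = (if (i\<in>S) = (i\<in>T) then 1 else 0)"
      unfolding r using h by (cases "i \<in> S"; cases "i \<in> T") (simp_all flip: of_real_mult of_real_add)
  qed
  also have "\<dots> = (if S = T then 1 else 0)"
  proof (cases "S = T")
    case True then show ?thesis by simp
  next
    case False
    then obtain i where "i \<in> S \<longleftrightarrow> i \<notin> T" by blast
    moreover have "i < M" using assms calculation by auto
    ultimately show ?thesis using False by (intro trans[OF prod_zero]) auto
  qed
  finally show ?thesis .
qed



lemma amp_real: "ket_pm_amp b m = complex_of_real ((if b \<and> m then - 1 else 1) / sqrt 2)"
  by (cases "b \<and> m") (simp_all add: ket_pm_amp_def)

lemma norm_pm_product: "cmod (pm_product M S Y) = (1 / sqrt 2) ^ M"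
proof -
  have "cmod (pm_product M S Y) = (\<Prod>i<M. cmod (ket_pm_amp (i \<in> Y) (i \<in> S)))"
    unfolding pm_product_def by (simp add: prod_norm)
  also have "\<dots> = (\<Prod>i<M. 1 / sqrt 2)"
    by (rule prod.cong[OF refl]) (simp only: amp_real norm_of_real, simp)
  finally show ?thesis by simp
qed

lemma parseval:
  "(\<Sum>Y\<in>bitstrings M. (cmod (pm_state M a Y))\<^sup>2) = (\<Sum>S\<in>bitstrings M. (cmod (a S))\<^sup>2)"
proof -
  let ?B = "bitstrings M"
  let ?p = "pm_product M"
  have fin: "finite ?B" by (simp add: bitstrings_def)
  have "complex_of_real (\<Sum>Y\<in>?B. (cmod (pm_state M a Y))\<^sup>2)
      = (\<Sum>Y\<in>?B. pm_state M a Y * cnj (pm_state M a Y))"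
    by (simp only: of_real_sum complex_norm_square)
  also have "\<dots> = (\<Sum>Y\<in>?B. \<Sum>S\<in>?B. \<Sum>T\<in>?B. a S * cnj (a T) * (?p S Y * cnj (?p T Y)))"
    unfolding pm_state_def
    apply (rule sum.cong[OF refl])
    apply (simp only: cnj_sum sum_product)
    apply (rule sum.cong[OF refl])+
    apply (simp add: mult_ac)
    done
  also have "\<dots> = (\<Sum>S\<in>?B. \<Sum>T\<in>?B. \<Sum>Y\<in>?B. a S * cnj (a T) * (?p S Y * cnj (?p T Y)))"
    by (rule trans[OF sum.swap], rule sum.cong[OF refl], rule sum.swap)
  also have "\<dots> = (\<Sum>S\<in>?B. \<Sum>T\<in>?B. a S * cnj (a T) * (if S = T then 1 else 0))"
    by (intro sum.cong refl, subst sum_distrib_left[symmetric], subst pm_orth) (auto simp: bitstrings_def)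
  also have "\<dots> = (\<Sum>S\<in>?B. a S * cnj (a S))"
    using fin by (simp add: if_distrib cong: if_cong)
  also have "\<dots> = complex_of_real (\<Sum>S\<in>?B. (cmod (a S))\<^sup>2)"
    by (simp only: of_real_sum complex_norm_square)
  finally show ?thesis using of_real_eq_iff by blast
qed

lemma amp_bound:
  assumes supp: "\<forall>S\<in>bitstrings M. a S \<noteq> 0 \<longrightarrow> S \<in> A" and AB: "A \<subseteq> bitstrings M"
  shows "(cmod (pm_state M a Y))\<^sup>2 \<le> real (card A) / 2 ^ M * (\<Sum>S\<in>bitstrings M. (cmod (a S))\<^sup>2)"
proof -
  let ?B = "bitstrings M"
  let ?u = "(1 / sqrt 2) ^ M :: real"
  have fin: "finite ?B" by (simp add: bitstrings_def)
  hence finA: "finite A" using AB finite_subset by blast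
  have "pm_state M a Y = (\<Sum>S\<in>A. a S * pm_product M S Y)"
    unfolding pm_state_def using fin AB supp by (intro sum.mono_neutral_right) auto
  hence "cmod (pm_state M a Y) \<le> (\<Sum>S\<in>A. cmod (a S) * ?u)"
    by (metis (no_types, lifting) norm_mult norm_pm_product norm_sum sum.cong)
  hence "(cmod (pm_state M a Y))\<^sup>2 \<le> (\<Sum>S\<in>A. cmod (a S) * ?u)\<^sup>2"
    by (simp add: power_mono)
  also have "\<dots> \<le> (\<Sum>S\<in>A. (cmod (a S))\<^sup>2) * (\<Sum>S\<in>A. ?u\<^sup>2)"
    by (rule Cauchy_Schwarz_ineq_sum)
  also have "(\<Sum>S\<in>A. ?u\<^sup>2) = real (card A) / 2 ^ M"
  proof -
    have s: "sqrt 2 ^ (M*2) = (2::real)^M" unfolding mult.commute[of M 2] power_mult by simp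
    show ?thesis by (simp add: power_mult_distrib[symmetric] power_divide s flip: power_mult)
  qed
  also have "(\<Sum>S\<in>A. (cmod (a S))\<^sup>2) \<le> (\<Sum>S\<in>?B. (cmod (a S))\<^sup>2)"
    using fin AB by (intro sum_mono2) auto
  hence "(\<Sum>S\<in>A. (cmod (a S))\<^sup>2) * (real (card A) / 2 ^ M) \<le> (\<Sum>S\<in>?B. (cmod (a S))\<^sup>2) * (real (card A) / 2 ^ M)"
    by (intro mult_right_mono) auto
  finally show ?thesis by (simp add: mult_ac)
qed



lemma sum_pow_card:
  fixes z :: real
  shows "(\<Sum>S\<in>Pow {..<M}. z ^ card S) = (1 + z) ^ M"
proof -
  have "(\<Sum>S\<in>Pow {..<M}. z ^ card S) = (\<Sum>S\<in>Pow {..<M}. \<Prod>i\<in>{..<M}. (\<lambda>i b. if b then z else 1) i (i \<in> S))"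
  proof (rule sum.cong[OF refl])
    fix S assume "S \<in> Pow {..<M}"
    hence "{..<M} \<inter> {i. i \<in> S} = S" by auto
    thus "z ^ card S = (\<Prod>i\<in>{..<M}. (\<lambda>i b. if b then z else 1) i (i \<in> S))"
      by (simp add: prod.If_cases)
  qed
  also have "\<dots> = (\<Prod>i\<in>{..<M}. 1 + z)"
    by (subst sum_Pow_prod) simp_all
  finally show ?thesis by simp
qed

lemma count_bound:
  fixes z t :: real
  assumes z: "z > 0" and C: "C \<subseteq> Pow {..<M}" and h: "\<And>S. S \<in> C \<Longrightarrow> z powr t \<le> z ^ card S"
  shows "real (card C) \<le> (1 + z) ^ M / z powr t"
proof -
  have fin: "finite (Pow {..<M})" by simp
  hence finC: "finite C" using C finite_subset by blast
  have zt: "z powr t > 0" using z by simp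
  have "real (card C) = (\<Sum>S\<in>C. 1)" by simp
  also have "\<dots> \<le> (\<Sum>S\<in>C. z ^ card S / z powr t)"
    using h zt by (intro sum_mono) simp
  also have "\<dots> \<le> (\<Sum>S\<in>Pow {..<M}. z ^ card S / z powr t)"
    using C fin z zt by (intro sum_mono2) auto
  also have "\<dots> = (1 + z) ^ M / z powr t"
    by (simp add: sum_divide_distrib[symmetric] sum_pow_card)
  finally show ?thesis .
qed

lemma count_le:
  fixes z t :: real
  assumes z: "z > 0" "z \<le> 1"
  shows "real (card {S\<in>Pow {..<M}. real (card S) \<le> t}) \<le> (1 + z) ^ M / z powr t"
proof (rule count_bound[OF z(1)])
  fix S assume "S \<in> {S\<in>Pow {..<M}. real (card S) \<le> t}"
  hence "real (card S) \<le> t" by simp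
  hence "z powr t \<le> z powr real (card S)" using z by (intro powr_mono') auto
  thus "z powr t \<le> z ^ card S" using z by (simp add: powr_realpow)
qed auto

lemma count_ge:
  fixes x t :: real
  assumes x: "x \<ge> 1"
  shows "real (card {S\<in>Pow {..<M}. real (card S) \<ge> t}) \<le> (1 + x) ^ M / x powr t"
proof (rule count_bound)
  show "x > 0" using x by simp
  fix S assume "S \<in> {S\<in>Pow {..<M}. real (card S) \<ge> t}"
  hence "real (card S) \<ge> t" by simp
  hence "x powr t \<le> x powr real (card S)" using x by (intro powr_mono) auto
  thus "x powr t \<le> x ^ card S" using x by (simp add: powr_realpow)
qed auto



lemma q_lt_2:
  fixes d :: real
  assumes d: "0 < d" "d \<le> 1/4"
  shows "(2 - d) / (1 - d) powr (1/2 - d) < 2"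
proof -
  let ?b = "1/2 - d"
  have pos: "1 - d > 0" using d by simp
  have "ln (1 / (1 - d)) \<le> 1 / (1 - d) - 1" using pos by (intro ln_le_minus_one) simp
  hence l: "ln (1 - d) \<ge> - (d / (1 - d))" using pos by (simp add: ln_div field_simps)
  have b0: "?b \<ge> 0" using d by simp
  have "(1 - d) powr ?b = exp (?b * ln (1 - d))" using pos by (simp add: powr_def)
  also have "\<dots> \<ge> 1 + ?b * ln (1 - d)" by (rule exp_ge_add_one_self)
  finally have e1: "(1 - d) powr ?b \<ge> 1 + ?b * ln (1 - d)" .
  have "?b * ln (1 - d) \<ge> ?b * (- (d / (1 - d)))" using b0 l by (intro mult_left_mono) auto
  with e1 have e2: "(1 - d) powr ?b \<ge> 1 - ?b * d / (1 - d)" by simp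
  have key: "2 - d < 2 * (1 - ?b * d / (1 - d))"
  proof -
    have "(2 - d) * (1 - d) < 2 * (1 - d) - 2 * ?b * d" using d by (simp add: algebra_simps power2_eq_square)
    thus ?thesis using pos by (simp add: field_simps)
  qed
  have pp: "(1 - d) powr ?b > 0" using pos by simp
  have "2 - d < 2 * (1 - d) powr ?b" using key mult_left_mono[OF e2, of 2] by linarith
  thus ?thesis using pp by (simp add: field_simps)
qed

lemma choose_zc:
  fixes \<rho> :: real
  assumes "\<rho> > 1"
  shows "\<exists>z c. 0 < z \<and> z \<le> 1 \<and> c > 0 \<and> (1 + z) / z powr c < \<rho>"
proof -
  define z where "z = (\<rho> - 1) / (\<rho> + 1)"
  have z0: "z > 0" "z < 1" using assms by (auto simp: z_def field_simps)
  define w where "w = \<rho> / (1 + z)"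
  have "1 + z < \<rho>" using assms by (simp add: z_def field_simps)
  hence w1: "w > 1" using z0 by (simp add: w_def field_simps)
  define c where "c = ln w / (2 * ln (1 / z))"
  have lz: "ln (1 / z) > 0" using z0 by (simp add: ln_div)
  have lw: "ln w > 0" using w1 by simp
  have c0: "c > 0" using lz lw by (simp add: c_def)
  have "z powr c = exp (c * ln z)" using z0 by (simp add: powr_def)
  also have "c * ln z = - (ln w / 2)" using lz z0 by (simp add: c_def ln_div field_simps)
  finally have zc: "z powr c = exp (- (ln w / 2))" .
  have "exp (ln w / 2) < exp (ln w)" using lw by simp
  hence "exp (ln w / 2) < w" using w1 by simp
  hence "(1 + z) * exp (ln w / 2) < \<rho>" using z0 by (simp add: w_def field_simps)
  hence "(1 + z) / z powr c < \<rho>" by (simp add: zc exp_minus field_simps)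
  thus ?thesis using z0 c0 by (intro exI[of _ z] exI[of _ c]) auto
qed



lemma powr_nat_mult: "0 < (x::real) \<Longrightarrow> x powr (real M * b) = (x powr b) ^ M"
  by (metis mult.commute powr_powr powr_realpow powr_gt_zero less_numeral_extra(3) powr_nonneg_iff)

lemma upper_base:
  fixes y d :: real
  assumes y: "y = 1 - d" and d: "0 < d" "d \<le> 1/4"
  shows "(1 + 1/y) / (1/y) powr (1/2 + d) = (2 - d) / y powr (1/2 - d)"
proof -
  have y0: "y > 0" using y d by simp
  have a: "(1/y) powr (1/2 + d) = 1 / y powr (1/2 + d)" using y0 by (simp add: powr_divide)
  have b: "y powr (1/2 + d) = y / y powr (1/2 - d)"
  proof -
    have "y powr (1/2 + d) = y powr (1 - (1/2 - d))" by simp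
    also have "\<dots> = y powr 1 / y powr (1/2 - d)" by (rule powr_diff)
    finally show ?thesis using y0 by simp
  qed
  have "(1 + 1/y) / (1/y) powr (1/2 + d) = (1 + 1/y) * (y / y powr (1/2 - d))" by (simp add: a b)
  also have "\<dots> = (1 + y) / y powr (1/2 - d)" using y0 by (simp add: field_simps)
  finally show ?thesis using y by simp
qed

theorem lemma1:
  fixes \<Delta> :: real
  assumes "\<Delta> > 0"
  shows "\<exists>c::real. c > 0 \<and> (\<exists>\<epsilon> :: nat \<Rightarrow> real. \<epsilon> \<longlonglongrightarrow> 0 \<and>
    (\<forall>\<^sub>F M in sequentially. \<forall>a :: nat set \<Rightarrow> complex.
       normalized M (pm_state M a) \<and>
       (\<forall>S\<in>bitstrings M. a S \<noteq> 0 \<longrightarrow> real (card S) \<le> c * real M)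
       \<longrightarrow> (\<Sum>Y\<in>{Y\<in>bitstrings M. real (card Y) < real M * (1/2 - \<Delta>)
                                  \<or> real (card Y) > real M * (1/2 + \<Delta>)}.
              outcome_prob M (pm_state M a) Y) \<le> \<epsilon> M))"
proof -
  define d where "d = min \<Delta> (1/4)"
  have d: "0 < d" "d \<le> 1/4" "d \<le> \<Delta>" using assms by (auto simp: d_def)
  define y where "y = 1 - d"
  have y: "0 < y" "y \<le> 1" using d by (auto simp: y_def)
  define q where "q = (2 - d) / y powr (1/2 - d)"
  have q2: "q < 2" unfolding q_def y_def using q_lt_2[OF d(1,2)] .
  have q0: "q > 0" using d y by (simp add: q_def)
  have "2 / q > 1" using q0 q2 by simp
  then obtain z c where zc: "0 < z" "z \<le> 1" "c > 0" "(1 + z) / z powr c < 2 / q"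
    using choose_zc by blast
  define g where "g = (1 + z) / z powr c"
  have g0: "g > 0" using zc by (simp add: g_def)
  define \<theta> where "\<theta> = q * g / 2"
  have th0: "\<theta> > 0" using q0 g0 by (simp add: \<theta>_def)
  have th1: "\<theta> < 1"
  proof -
    have "q * g < q * (2 / q)" using zc(4) q0 by (intro mult_strict_left_mono) (auto simp: g_def)
    thus ?thesis using q0 by (simp add: \<theta>_def)
  qed
  define \<epsilon> where "\<epsilon> = (\<lambda>M::nat. 2 * \<theta> ^ M)"
  have lim: "\<epsilon> \<longlonglongrightarrow> 0"
    unfolding \<epsilon>_def using th0 th1 by (intro tendsto_mult_right_zero LIMSEQ_power_zero) simp
  have main: "(\<Sum>Y\<in>{Y\<in>bitstrings M. real (card Y) < real M * (1/2 - \<Delta>)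
                                  \<or> real (card Y) > real M * (1/2 + \<Delta>)}.
              outcome_prob M (pm_state M a) Y) \<le> \<epsilon> M"
    if nrm: "normalized M (pm_state M a)"
      and supp: "\<forall>S\<in>bitstrings M. a S \<noteq> 0 \<longrightarrow> real (card S) \<le> c * real M" for M a
  proof -
    let ?Bs = "bitstrings M"
    let ?Bd = "{Y\<in>bitstrings M. real (card Y) < real M * (1/2 - \<Delta>) \<or> real (card Y) > real M * (1/2 + \<Delta>)}"
    define A where "A = {S\<in>?Bs. real (card S) \<le> c * real M}"
    have AB: "A \<subseteq> ?Bs" by (auto simp: A_def)
    have suppA: "\<forall>S\<in>?Bs. a S \<noteq> 0 \<longrightarrow> S \<in> A" using supp by (auto simp: A_def)
    have one: "(\<Sum>S\<in>?Bs. (cmod (a S))\<^sup>2) = 1"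
      using nrm parseval by (simp add: normalized_def)
    have each: "outcome_prob M (pm_state M a) Y \<le> real (card A) / 2 ^ M" for Y
      using amp_bound[OF suppA AB, of Y] one by (simp add: outcome_prob_def)
    have s1: "(\<Sum>Y\<in>?Bd. outcome_prob M (pm_state M a) Y) \<le> real (card ?Bd) * (real (card A) / 2 ^ M)"
      by (rule sum_bounded_above) (rule each)
    have cA: "real (card A) \<le> g ^ M"
    proof -
      have "real (card A) \<le> (1 + z) ^ M / z powr (real M * c)"
        using count_le[OF zc(1,2), of M "real M * c"] by (simp add: A_def bitstrings_def mult.commute)
      also have "\<dots> = g ^ M" using zc by (simp add: powr_nat_mult g_def power_divide)
      finally show ?thesis .
    qed
    define L where "L = {S\<in>Pow {..<M}. real (card S) \<le> real M * (1/2 - d)}"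
    define U where "U = {S\<in>Pow {..<M}. real (card S) \<ge> real M * (1/2 + d)}"
    have "?Bd \<subseteq> L \<union> U"
    proof
      fix Y assume "Y \<in> ?Bd"
      moreover have "real M * (1/2 - \<Delta>) \<le> real M * (1/2 - d)" "real M * (1/2 + d) \<le> real M * (1/2 + \<Delta>)"
        using d by (auto intro!: mult_left_mono)
      ultimately show "Y \<in> L \<union> U" by (auto simp: L_def U_def bitstrings_def)
    qed
    hence "card ?Bd \<le> card (L \<union> U)" by (intro card_mono) (auto simp: L_def U_def)
    also have "\<dots> \<le> card L + card U" by (rule card_Un_le)
    finally have cBd: "real (card ?Bd) \<le> real (card L) + real (card U)" by linarith
    have cL: "real (card L) \<le> q ^ M"
    proof -
      have "real (card L) \<le> (1 + y) ^ M / y powr (real M * (1/2 - d))"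
        unfolding L_def by (rule count_le[OF y])
      also have "\<dots> = q ^ M" using y by (simp add: powr_nat_mult q_def power_divide y_def)
      finally show ?thesis .
    qed
    have cU: "real (card U) \<le> q ^ M"
    proof -
      have x1: "1 / y \<ge> 1" using y by simp
      have "real (card U) \<le> (1 + 1/y) ^ M / (1/y) powr (real M * (1/2 + d))"
        unfolding U_def by (rule count_ge[OF x1])
      also have "\<dots> = ((1 + 1/y) / (1/y) powr (1/2 + d)) ^ M"
        using y by (simp add: powr_nat_mult power_divide)
      also have "\<dots> = q ^ M" using upper_base[OF y_def d(1,2)] by (simp add: q_def)
      finally show ?thesis .
    qed
    have "(\<Sum>Y\<in>?Bd. outcome_prob M (pm_state M a) Y) \<le> real (card ?Bd) * (real (card A) / 2 ^ M)"
      by (rule s1)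
    also have "\<dots> \<le> (2 * q ^ M) * (g ^ M / 2 ^ M)"
      using cBd cL cU cA by (intro mult_mono divide_right_mono) auto
    also have "\<dots> = \<epsilon> M" by (simp add: \<epsilon>_def \<theta>_def power_mult_distrib power_divide)
    finally show ?thesis .
  qed
  show ?thesis
    using zc(3) lim main by (intro exI[of _ c] conjI exI[of _ \<epsilon>] always_eventually allI impI) auto
qed

end
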